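(* Let $F$ be a field, $V$ a nonzero vector space over $F$, $\Gamma$ a nonempty set, $\varphi:\Gamma\to\Gamma$ a map and $\mathfrak{w}\in F^\Gamma$, and let $\sigma_{\varphi,\mathfrak{w}}:V^\Gamma\to V^\Gamma$, $(x_\alpha)_{\alpha\in\Gamma}\mapsto(\mathfrak{w}_\alpha x_{\varphi(\alpha)})_{\alpha\in\Gamma}$. If $\downarrow\mathfrak{Z}=\Gamma$, then ${\rm Eigen}(\sigma_{\varphi,\mathfrak{w}},V^\Gamma)\subseteq\{0\}$; moreover in this case ${\rm Eigen}(\sigma_{\varphi,\mathfrak{w}},V^\Gamma)=\varnothing$ if $\varphi(\Gamma\setminus\mathfrak{Z})=\Gamma$, and ${\rm Eigen}(\sigma_{\varphi,\mathfrak{w}},V^\Gamma)=\{0\}$ otherwise.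
   Context: For a linear map $T:W\to W$ on an $F$-vector space $W$, ${\rm Eigen}(T,W)$ is the set of all $r\in F$ such that $T(x)=rx$ for some nonzero $x\in W$. $\mathfrak{Z}:=\{\alpha\in\Gamma:\mathfrak{w}_\alpha=0\}$ and $\downarrow\mathfrak{Z}:=\bigcup_{n\geq0}\varphi^{-n}(\mathfrak{Z})$. *)

theory Defs
  imports Main HOL.Vector_Spaces "HOL-Library.Function_Algebras"
begin

definition Eigen :: "('f \<Rightarrow> 'w \<Rightarrow> 'w) \<Rightarrow> ('w::zero \<Rightarrow> 'w) \<Rightarrow> 'w set \<Rightarrow> 'f set" where
  "Eigen scale T W = {r. \<exists>x\<in>W. x \<noteq> 0 \<and> T x = scale r x}"

definition fun_scale :: "('f \<Rightarrow> 'v \<Rightarrow> 'v) \<Rightarrow> 'f \<Rightarrow> ('g \<Rightarrow> 'v) \<Rightarrow> ('g \<Rightarrow> 'v)" where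
  "fun_scale scale r x = (\<lambda>\<alpha>. scale r (x \<alpha>))"

definition wshift :: "('f \<Rightarrow> 'v \<Rightarrow> 'v) \<Rightarrow> ('g \<Rightarrow> 'g) \<Rightarrow> ('g \<Rightarrow> 'f) \<Rightarrow> ('g \<Rightarrow> 'v) \<Rightarrow> ('g \<Rightarrow> 'v)" where
  "wshift scale \<phi> w x = (\<lambda>\<alpha>. scale (w \<alpha>) (x (\<phi> \<alpha>)))"

definition Zset :: "('g \<Rightarrow> 'f::zero) \<Rightarrow> 'g set" where
  "Zset w = {\<alpha>. w \<alpha> = 0}"

definition downZ :: "('g \<Rightarrow> 'g) \<Rightarrow> ('g \<Rightarrow> 'f::zero) \<Rightarrow> 'g set" where
  "downZ \<phi> w = (\<Union>n. (\<phi> ^^ n) -` Zset w)"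

end

theory Submission
  imports Defs
begin

theorem lemma2p2:
  fixes scale :: "'f::field \<Rightarrow> 'v::ab_group_add \<Rightarrow> 'v"
    and \<phi> :: "'g \<Rightarrow> 'g" and w :: "'g \<Rightarrow> 'f"
  assumes "vector_space scale"
    and "\<exists>v::'v. v \<noteq> 0"
    and "downZ \<phi> w = UNIV"
  shows "Eigen (fun_scale scale) (wshift scale \<phi> w) UNIV \<subseteq> {0}
    \<and> (\<phi> ` (UNIV - Zset w) = UNIV \<longrightarrow> Eigen (fun_scale scale) (wshift scale \<phi> w) UNIV = {})
    \<and> (\<phi> ` (UNIV - Zset w) \<noteq> UNIV \<longrightarrow> Eigen (fun_scale scale) (wshift scale \<phi> w) UNIV = {0})"
proof -
  interpret vs: vector_space scale by fact
  have eq: "\<And>x r. wshift scale \<phi> w x = fun_scale scale r x \<longleftrightarrow> (\<forall>\<alpha>. scale (w \<alpha>) (x (\<phi> \<alpha>)) = scale r (x \<alpha>))"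
    by (auto simp: wshift_def fun_scale_def fun_eq_iff)
  have sub: "Eigen (fun_scale scale) (wshift scale \<phi> w) UNIV \<subseteq> {0}"
  proof
    fix r assume "r \<in> Eigen (fun_scale scale) (wshift scale \<phi> w) UNIV"
    then obtain x where x0: "x \<noteq> 0" and h: "\<And>\<alpha>. scale (w \<alpha>) (x (\<phi> \<alpha>)) = scale r (x \<alpha>)"
      unfolding Eigen_def using eq by blast
    show "r \<in> {0}"
    proof (rule ccontr)
      assume "r \<notin> {0}"
      hence r: "r \<noteq> 0" by simp
      have "\<And>\<alpha>. w ((\<phi> ^^ n) \<alpha>) = 0 \<Longrightarrow> x \<alpha> = 0" for n
      proof (induction n)
        case 0
        then show ?case using h[of \<alpha>] r by simp
      next
        case (Suc n)
        then have "x (\<phi> \<alpha>) = 0" by (simp add: funpow_Suc_right del: funpow.simps)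
        then show ?case using h[of \<alpha>] r by simp
      qed
      moreover have "\<And>\<alpha>. \<exists>n. w ((\<phi> ^^ n) \<alpha>) = 0"
        using assms(3) unfolding downZ_def Zset_def by (auto simp: set_eq_iff)
      ultimately have "x = 0" by (metis zero_fun_def ext)
      with x0 show False by simp
    qed
  qed
  have e1: "\<phi> ` (UNIV - Zset w) = UNIV \<longrightarrow> Eigen (fun_scale scale) (wshift scale \<phi> w) UNIV = {}"
  proof
    assume s: "\<phi> ` (UNIV - Zset w) = UNIV"
    have "0 \<notin> Eigen (fun_scale scale) (wshift scale \<phi> w) UNIV"
    proof
      assume "0 \<in> Eigen (fun_scale scale) (wshift scale \<phi> w) UNIV"
      then obtain x where x0: "x \<noteq> 0" and h: "\<And>\<alpha>. scale (w \<alpha>) (x (\<phi> \<alpha>)) = scale 0 (x \<alpha>)"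
        unfolding Eigen_def using eq by blast
      have "x \<beta> = 0" for \<beta>
      proof -
        obtain \<alpha> where "w \<alpha> \<noteq> 0" "\<beta> = \<phi> \<alpha>" using s unfolding Zset_def by (metis (mono_tags, lifting) DiffE UNIV_I imageE mem_Collect_eq)
        then show ?thesis using h[of \<alpha>] by simp
      qed
      hence "x = 0" by (simp add: fun_eq_iff)
      with x0 show False by simp
    qed
    with sub show "Eigen (fun_scale scale) (wshift scale \<phi> w) UNIV = {}" by blast
  qed
  have e2: "\<phi> ` (UNIV - Zset w) \<noteq> UNIV \<longrightarrow> Eigen (fun_scale scale) (wshift scale \<phi> w) UNIV = {0}"
  proof
    assume "\<phi> ` (UNIV - Zset w) \<noteq> UNIV"
    then obtain \<beta> where b: "\<beta> \<notin> \<phi> ` (UNIV - Zset w)" by blast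
    obtain v :: 'v where v: "v \<noteq> 0" using assms(2) by blast
    define x where "x = (\<lambda>\<gamma>. if \<gamma> = \<beta> then v else 0)"
    have "x \<noteq> 0" using v by (auto simp: x_def fun_eq_iff)
    moreover have "\<forall>\<alpha>. scale (w \<alpha>) (x (\<phi> \<alpha>)) = scale 0 (x \<alpha>)"
    proof
      fix \<alpha>
      show "scale (w \<alpha>) (x (\<phi> \<alpha>)) = scale 0 (x \<alpha>)"
      proof (cases "\<phi> \<alpha> = \<beta>")
        case True
        then have "w \<alpha> = 0" using b unfolding Zset_def by auto
        then show ?thesis by simp
      next
        case False
        then show ?thesis by (simp add: x_def)
      qed
    qed
    ultimately have "0 \<in> Eigen (fun_scale scale) (wshift scale \<phi> w) UNIV"
      unfolding Eigen_def using eq by blast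
    with sub show "Eigen (fun_scale scale) (wshift scale \<phi> w) UNIV = {0}" by blast
  qed
  show ?thesis using sub e1 e2 by blast
qed

end
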